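(* Let $m=x_{i_1}x_{i_2}\cdots x_{i_s}$ be a squarefree monomial of $S=k[x_1,\dots,x_n]$ with $i_1<i_2<\dots<i_s$, and let $B=\mathrm{sfBorel}(m)$. Then \[B^{\vee}=\mathrm{sfBorel}\big(x_1x_2\cdots x_{i_1},\; x_2x_3\cdots x_{i_2},\;\dots,\; x_sx_{s+1}\cdots x_{i_s}\big).\]
   Context: For monomials $m_1=x_{a_1}\cdots x_{a_r}$, $m_2=x_{b_1}\cdots x_{b_t}$ in factored form (indices weakly increasing), $m_1$ precedes $m_2$ in the Borel order if $r\ge t$ and $a_j\le b_j$ for $j\le t$. For a set $T$ of squarefree monomials, $\mathrm{sfBorel}(T)$ is the ideal generated by all squarefree monomials that precede some element of $T$ in the Borel order (the smallest squarefree Borel ideal containing $T$). For a squarefree monomial $u$, $P_u$ is the prime ideal generated by the variables dividing $u$. The Alexander dual of a squarefree monomial ideal $I$ with minimal monomial generators $u_1,\dots,u_t$ is $I^{\vee}=P_{u_1}\cap\dots\cap P_{u_t}$. *)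

theory Defs
  imports Main "HOL-Library.Multiset"
begin

text \<open>Monomials of S = k[x_1,...,x_n] are represented by multisets of variable
indices (index i with multiplicity e means x_i^e).  A monomial ideal is represented
by the set of monomials it contains; divisibility of monomials is multiset inclusion.\<close>

definition monomial :: "nat \<Rightarrow> nat multiset \<Rightarrow> bool" where
  "monomial n u \<longleftrightarrow> set_mset u \<subseteq> {1..n}"

definition sqfree :: "nat multiset \<Rightarrow> bool" where
  "sqfree u \<longleftrightarrow> (\<forall>i. count u i \<le> 1)"

definition mon_ideal :: "nat \<Rightarrow> nat multiset set \<Rightarrow> nat multiset set" where
  "mon_ideal n G = {w. monomial n w \<and> (\<exists>g\<in>G. g \<subseteq># w)}"

definition borel_prec :: "nat multiset \<Rightarrow> nat multiset \<Rightarrow> bool" where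
  "borel_prec m1 m2 \<longleftrightarrow>
     (let a = sorted_list_of_multiset m1; b = sorted_list_of_multiset m2
      in length b \<le> length a \<and> (\<forall>j<length b. a ! j \<le> b ! j))"

definition sfBorel :: "nat \<Rightarrow> nat multiset set \<Rightarrow> nat multiset set" where
  "sfBorel n T = mon_ideal n {u. monomial n u \<and> sqfree u \<and> (\<exists>t\<in>T. borel_prec u t)}"

definition min_gens :: "nat multiset set \<Rightarrow> nat multiset set" where
  "min_gens I = {u\<in>I. \<forall>v\<in>I. v \<subseteq># u \<longrightarrow> v = u}"

definition prime_of :: "nat \<Rightarrow> nat multiset \<Rightarrow> nat multiset set" where
  "prime_of n u = mon_ideal n {{#i#} | i. i \<in># u}"

definition alex_dual :: "nat \<Rightarrow> nat multiset set \<Rightarrow> nat multiset set" where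
  "alex_dual n I = {w. monomial n w \<and> (\<forall>u\<in>min_gens I. w \<in> prime_of n u)}"

end

theory Submission
  imports Defs
begin


abbreviation sl :: "nat set \<Rightarrow> nat list" where "sl \<equiv> sorted_list_of_set"

definition prec :: "nat set \<Rightarrow> nat set \<Rightarrow> bool" where
  "prec A G \<longleftrightarrow> card G \<le> card A \<and> (\<forall>k<card G. sl A ! k \<le> sl G ! k)"

lemma nth_le_of_card:
  assumes "finite A" "k+1 \<le> card (A \<inter> {..x})"
  shows "k < card A \<and> sl A ! k \<le> x"
proof -
  have kA: "k < card A"
    using assms card_mono[of A "A \<inter> {..x}"] by auto
  let ?L = "sl A"
  have len: "length ?L = card A" by simp
  have srt: "sorted ?L" by simp
  { assume gt: "?L ! k > x"
    have "A \<inter> {..x} \<subseteq> set (take k ?L)"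
    proof
      fix a assume a: "a \<in> A \<inter> {..x}"
      then have "a \<in> set ?L" using assms(1) by simp
      then obtain p where p: "p < length ?L" "?L ! p = a" by (auto simp: in_set_conv_nth)
      have "p < k"
      proof (rule ccontr)
        assume "\<not> p < k"
        then have "?L ! k \<le> ?L ! p" using srt p(1) by (simp add: sorted_nth_mono)
        then show False using gt a p by auto
      qed
      then show "a \<in> set (take k ?L)" using p by (auto simp: in_set_conv_nth)
    qed
    then have "card (A \<inter> {..x}) \<le> card (set (take k ?L))" by (simp add: card_mono)
    also have "\<dots> \<le> k" using card_length[of "take k ?L"] by simp
    finally have False using assms(2) by simp }
  then show ?thesis using kA by force
qed

lemma card_of_nth_le:
  assumes "finite A" "k < card A" "\<forall>j\<le>k. sl A ! j \<le> x"
  shows "set (take (k+1) (sl A)) \<subseteq> A \<inter> {..x} \<and> card (set (take (k+1) (sl A))) = k+1"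
proof -
  let ?L = "sl A"
  have d: "distinct (take (k+1) ?L)" by simp
  have c: "card (set (take (k+1) ?L)) = k+1" using distinct_card[OF d] assms(2) by simp
  have "set (take (k+1) ?L) \<subseteq> A \<inter> {..x}"
  proof
    fix a assume "a \<in> set (take (k+1) ?L)"
    then obtain p where p: "p < length (take (k+1) ?L)" "take (k+1) ?L ! p = a" by (auto simp: in_set_conv_nth)
    then have "p \<le> k" "p < length ?L" by auto
    then show "a \<in> A \<inter> {..x}" using p assms by (metis IntI atMost_iff nth_mem nth_take set_sorted_list_of_set Suc_eq_plus1 le_imp_less_Suc)
  qed
  with c show ?thesis by simp
qed

lemma prec_iff:
  assumes "finite A" "finite G"
  shows "prec A G \<longleftrightarrow> (\<forall>k<card G. k+1 \<le> card (A \<inter> {..sl G ! k}))"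
proof
  assume p: "prec A G"
  show "\<forall>k<card G. k+1 \<le> card (A \<inter> {..sl G ! k})"
  proof (intro allI impI)
    fix k assume k: "k < card G"
    have "\<forall>j\<le>k. sl A ! j \<le> sl G ! k"
    proof (intro allI impI)
      fix j assume "j \<le> k"
      then have "sl G ! j \<le> sl G ! k" using k by (simp add: sorted_nth_mono)
      moreover have "sl A ! j \<le> sl G ! j" using p k \<open>j \<le> k\<close> unfolding prec_def by simp
      ultimately show "sl A ! j \<le> sl G ! k" by simp
    qed
    then have "set (take (k+1) (sl A)) \<subseteq> A \<inter> {..sl G ! k} \<and> card (set (take (k+1) (sl A))) = k+1"
      using card_of_nth_le[OF assms(1)] p k unfolding prec_def by auto
    then show "k+1 \<le> card (A \<inter> {..sl G ! k})"
      by (metis assms(1) card_mono finite_Int)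
  qed
next
  assume h: "\<forall>k<card G. k+1 \<le> card (A \<inter> {..sl G ! k})"
  have "card G \<le> card A"
  proof (cases "card G")
    case (Suc m)
    then have "m+1 \<le> card (A \<inter> {..sl G ! m})" using h by simp
    then show ?thesis using nth_le_of_card[OF assms(1), of m] Suc by (metis Suc_leI Suc_eq_plus1)
  qed simp
  then show "prec A G" unfolding prec_def using nth_le_of_card[OF assms(1)] h by blast
qed


lemma prec_mono:
  assumes "finite B" "finite G" "A \<subseteq> B" "prec A G"
  shows "prec B G"
proof -
  have fA: "finite A" using assms finite_subset by blast
  have "\<forall>k<card G. k+1 \<le> card (A \<inter> {..sl G ! k})" using prec_iff[OF fA assms(2)] assms(4) by simp
  moreover have "\<And>x. card (A \<inter> {..x}) \<le> card (B \<inter> {..x})" using assms by (intro card_mono) auto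
  ultimately have "\<forall>k<card G. k+1 \<le> card (B \<inter> {..sl G ! k})" using le_trans by blast
  then show ?thesis using prec_iff[OF assms(1,2)] by simp
qed

lemma borel_prec_set:
  assumes "finite A" "finite G"
  shows "borel_prec (mset_set A) (mset_set G) \<longleftrightarrow> prec A G"
  using assms unfolding borel_prec_def prec_def by (simp add: Let_def)

lemma sqfree_eq: "sqfree u \<Longrightarrow> u = mset_set (set_mset u)"
proof (intro multiset_eqI)
  fix x assume "sqfree u"
  then have "count u x \<le> 1" unfolding sqfree_def by auto
  then show "count u x = count (mset_set (set_mset u)) x"
    by (cases "count u x") (auto simp: count_mset_set' count_eq_zero_iff, metis count_inI nat.distinct(1))
qed

lemma sqfree_mset_set: "sqfree (mset_set A)"
  unfolding sqfree_def by (simp add: count_mset_set')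

lemma mem_sfBorel_single:
  assumes "finite G"
  shows "w \<in> sfBorel n {mset_set G} \<longleftrightarrow> monomial n w \<and> prec (set_mset w) G"
proof
  assume "w \<in> sfBorel n {mset_set G}"
  then obtain u where u: "monomial n w" "u \<subseteq># w" "sqfree u" "borel_prec u (mset_set G)"
    unfolding sfBorel_def mon_ideal_def by auto
  have "prec (set_mset u) G" using u(3,4) sqfree_eq borel_prec_set[OF _ assms] by (metis finite_set_mset)
  moreover have "set_mset u \<subseteq> set_mset w" using u(2) by (simp add: set_mset_mono)
  ultimately show "monomial n w \<and> prec (set_mset w) G" using prec_mono assms u(1) by blast
next
  assume h: "monomial n w \<and> prec (set_mset w) G"
  let ?u = "mset_set (set_mset w)"
  have "?u \<subseteq># w" by (metis mset_set_set_mset_msubset)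
  moreover have "monomial n ?u" using h unfolding monomial_def by simp
  moreover have "borel_prec ?u (mset_set G)" using h borel_prec_set[OF _ assms] by simp
  ultimately show "w \<in> sfBorel n {mset_set G}" using h sqfree_mset_set
    unfolding sfBorel_def mon_ideal_def by blast
qed

lemma sfBorel_union: "w \<in> sfBorel n T \<longleftrightarrow> (\<exists>t\<in>T. w \<in> sfBorel n {t})"
  unfolding sfBorel_def mon_ideal_def by blast


lemma nth_ge:
  assumes "sorted_wrt (<) i" "set i \<subseteq> {1..n}" "j < length i"
  shows "j+1 \<le> i ! j"
proof -
  have d: "distinct (take (j+1) i)" using assms(1) by (simp add: strict_sorted_iff)
  have "set (take (j+1) i) \<subseteq> {1..i!j}"
  proof
    fix a assume "a \<in> set (take (j+1) i)"
    then obtain p where p: "p \<le> j" "i ! p = a" using assms(3) by (auto simp: in_set_conv_nth nth_take less_Suc_eq_le)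
    have "i ! p \<le> i ! j" using p(1) assms(1,3) by (simp add: strict_sorted_iff sorted_nth_mono)
    moreover have "i ! p \<in> set i" using p assms(3) by (intro nth_mem) simp
    ultimately show "a \<in> {1..i!j}" using assms(2) p by auto
  qed
  then have "card (set (take (j+1) i)) \<le> i ! j" by (metis card_atLeastAtMost card_mono diff_Suc_1 finite_atLeastAtMost)
  then show ?thesis using distinct_card[OF d] assms(3) by simp
qed

lemma exists_sub:
  assumes "finite A" "sorted_wrt (<) i" "prec A (set i)"
  shows "\<exists>U\<subseteq>A. card U = length i \<and> prec U (set i)"
proof -
  have sli: "sl (set i) = i" using assms(2) by (metis sorted_list_of_set.idem_if_sorted_distinct strict_sorted_iff)
  have ci: "card (set i) = length i" using assms(2) by (simp add: strict_sorted_iff distinct_card)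
  let ?s = "length i"
  define U where "U = set (take ?s (sl A))"
  have sA: "?s \<le> card A" using assms(3) ci unfolding prec_def by simp
  have cU: "card U = ?s" unfolding U_def using sA by (simp add: distinct_card)
  have UA: "U \<subseteq> A" unfolding U_def using assms(1) by (metis set_sorted_list_of_set set_take_subset)
  have fU: "finite U" unfolding U_def by simp
  have "\<forall>k<card (set i). k+1 \<le> card (U \<inter> {..sl (set i) ! k})"
  proof (intro allI impI)
    fix k assume k: "k < card (set i)"
    have "\<forall>j\<le>k. sl A ! j \<le> i ! k"
    proof (intro allI impI)
      fix j assume j: "j \<le> k"
      have "sl A ! j \<le> i ! j" using assms(3) k j sli ci unfolding prec_def by auto
      moreover have "i ! j \<le> i ! k" using j k ci assms(2) by (simp add: strict_sorted_iff sorted_nth_mono)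
      ultimately show "sl A ! j \<le> i ! k" by simp
    qed
    then have h: "set (take (k+1) (sl A)) \<subseteq> A \<inter> {..i!k} \<and> card (set (take (k+1) (sl A))) = k+1"
      using card_of_nth_le[OF assms(1), of k] k ci sA by auto
    have "set (take (k+1) (sl A)) \<subseteq> U" unfolding U_def using k ci by (simp add: set_take_subset_set_take)
    then have "set (take (k+1) (sl A)) \<subseteq> U \<inter> {..i!k}" using h by auto
    then show "k+1 \<le> card (U \<inter> {..sl (set i) ! k})" using h sli fU by (metis card_mono finite_Int)
  qed
  then have "prec U (set i)" using prec_iff[OF fU] by simp
  then show ?thesis using UA cU by blast
qed


lemma min_gens_char:
  assumes "sorted_wrt (<) i"
  shows "u \<in> min_gens (sfBorel n {mset_set (set i)}) \<longleftrightarrow>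
         (\<exists>U. U \<subseteq> {1..n} \<and> card U = length i \<and> prec U (set i) \<and> u = mset_set U)"
proof
  assume u: "u \<in> min_gens (sfBorel n {mset_set (set i)})"
  then have uB: "u \<in> sfBorel n {mset_set (set i)}" unfolding min_gens_def by simp
  then have m: "monomial n u" "prec (set_mset u) (set i)" using mem_sfBorel_single by auto
  then obtain U where U: "U \<subseteq> set_mset u" "card U = length i" "prec U (set i)"
    using exists_sub[OF _ assms] by blast
  have fU: "finite U" using U(1) finite_subset by blast
  have "mset_set U \<in> sfBorel n {mset_set (set i)}"
    using mem_sfBorel_single[of "set i"] U m fU unfolding monomial_def by auto
  moreover have "mset_set U \<subseteq># u"
    using U(1) fU by (metis mset_set_set_mset_msubset subset_imp_msubset_mset_set finite_set_mset subset_mset.order_trans)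
  ultimately have "mset_set U = u" using u unfolding min_gens_def by blast
  then show "\<exists>U. U \<subseteq> {1..n} \<and> card U = length i \<and> prec U (set i) \<and> u = mset_set U"
    using U m(1) unfolding monomial_def by auto
next
  assume "\<exists>U. U \<subseteq> {1..n} \<and> card U = length i \<and> prec U (set i) \<and> u = mset_set U"
  then obtain U where U: "U \<subseteq> {1..n}" "card U = length i" "prec U (set i)" "u = mset_set U" by blast
  have fU: "finite U" using U(1) finite_subset by blast
  have uB: "u \<in> sfBorel n {mset_set (set i)}"
    using mem_sfBorel_single[of "set i"] U fU unfolding monomial_def by auto
  have "\<forall>v\<in>sfBorel n {mset_set (set i)}. v \<subseteq># u \<longrightarrow> v = u"
  proof (intro ballI impI)
    fix v assume v: "v \<in> sfBorel n {mset_set (set i)}" "v \<subseteq># u"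
    then have pv: "prec (set_mset v) (set i)" using mem_sfBorel_single by auto
    have ci: "card (set i) = length i" using assms by (simp add: strict_sorted_iff distinct_card)
    have sv: "set_mset v \<subseteq> U" using v(2) U(4) fU by (metis finite_set_mset_mset_set set_mset_mono)
    have "card U \<le> card (set_mset v)" using pv U(2) ci unfolding prec_def by simp
    then have eq: "set_mset v = U" using sv fU by (simp add: card_seteq)
    show "v = u"
    proof (intro multiset_eqI)
      fix x
      have "count v x \<le> count u x" using v(2) by (simp add: subseteq_mset_def)
      moreover have "count u x \<le> 1" using U(4) by (simp add: count_mset_set')
      moreover have "x \<in> U \<Longrightarrow> 1 \<le> count v x" using eq by (metis One_nat_def Suc_leI count_greater_zero_iff)
      moreover have "x \<notin> U \<Longrightarrow> count u x = 0" using U(4) by (simp add: count_mset_set')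
      ultimately show "count v x = count u x" using U(4) fU by (cases "x \<in> U") (auto simp: count_mset_set' le_Suc_eq count_eq_zero_iff)
    qed
  qed
  then show "u \<in> min_gens (sfBorel n {mset_set (set i)})" using uB unfolding min_gens_def by blast
qed

lemma prime_of_char: "w \<in> prime_of n u \<longleftrightarrow> monomial n w \<and> set_mset u \<inter> set_mset w \<noteq> {}"
proof -
  have "(\<exists>g\<in>{{#i#} | i. i \<in># u}. g \<subseteq># w) \<longleftrightarrow> (\<exists>i. i \<in># u \<and> i \<in># w)" by auto
  then show ?thesis unfolding prime_of_def mon_ideal_def by blast
qed

lemma window:
  assumes "finite A" "j+1 \<le> (x::nat)"
  shows "(\<forall>k<x-j. k+1 \<le> card (A \<inter> {..j+1+k})) \<longleftrightarrow> x - j \<le> card (A \<inter> {..x})"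
proof
  assume h: "\<forall>k<x-j. k+1 \<le> card (A \<inter> {..j+1+k})"
  have "x-j-1 < x-j" using assms(2) by simp
  then have "(x-j-1)+1 \<le> card (A \<inter> {..j+1+(x-j-1)})" by (rule h[rule_format])
  moreover have "j+1+(x-j-1) = x" "(x-j-1)+1 = x-j" using assms(2) by simp_all
  ultimately show "x - j \<le> card (A \<inter> {..x})" by metis
next
  assume h: "x - j \<le> card (A \<inter> {..x})"
  show "\<forall>k<x-j. k+1 \<le> card (A \<inter> {..j+1+k})"
  proof (intro allI impI)
    fix k assume k: "k < x - j"
    let ?t = "j+1+k"
    have "A \<inter> {..x} \<subseteq> (A \<inter> {..?t}) \<union> {?t<..x}" by auto
    then have "card (A \<inter> {..x}) \<le> card ((A \<inter> {..?t}) \<union> {?t<..x})" by (simp add: card_mono assms(1))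
    also have "\<dots> \<le> card (A \<inter> {..?t}) + card {?t<..x}" by (rule card_Un_le)
    also have "card {?t<..x} = x - ?t" by simp
    finally have "card (A \<inter> {..x}) \<le> card (A \<inter> {..?t}) + (x - ?t)" .
    then show "k+1 \<le> card (A \<inter> {..?t})" using h k by linarith
  qed
qed



lemma rhs_char:
  assumes "sorted_wrt (<) i" "set i \<subseteq> {1..n}"
  shows "w \<in> sfBorel n {mset_set {j+1 .. i ! j} | j. j < length i} \<longleftrightarrow>
         monomial n w \<and> (\<exists>j<length i. i!j - j \<le> card (set_mset w \<inter> {..i!j}))"
proof -
  have "w \<in> sfBorel n {mset_set {j+1 .. i ! j} | j. j < length i} \<longleftrightarrow>
        (\<exists>j<length i. w \<in> sfBorel n {mset_set {j+1 .. i ! j}})" (is "?L \<longleftrightarrow> ?R")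
  proof
    assume ?L
    then have "\<exists>t\<in>{mset_set {j+1 .. i ! j} | j. j < length i}. w \<in> sfBorel n {t}"
      by (rule sfBorel_union[THEN iffD1])
    then obtain t where t: "t \<in> {mset_set {j+1 .. i ! j} | j. j < length i}" "w \<in> sfBorel n {t}"
      by (elim bexE)
    then obtain j where "j < length i" "t = mset_set {j+1 .. i ! j}" by blast
    then show ?R using t(2) by blast
  next
    assume ?R
    then obtain j where j: "j < length i" "w \<in> sfBorel n {mset_set {j+1 .. i ! j}}" by blast
    then have "mset_set {j+1 .. i ! j} \<in> {mset_set {j+1 .. i ! j} | j. j < length i}" by blast
    then have "\<exists>t\<in>{mset_set {j+1 .. i ! j} | j. j < length i}. w \<in> sfBorel n {t}"
      using j(2) by (intro bexI)
    then show ?L by (rule sfBorel_union[THEN iffD2])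
  qed
  also have "\<dots> \<longleftrightarrow> (\<exists>j<length i. monomial n w \<and> prec (set_mset w) {j+1 .. i ! j})"
    by (simp only: mem_sfBorel_single[OF finite_atLeastAtMost])
  also have "\<dots> \<longleftrightarrow> (\<exists>j<length i. monomial n w \<and> i!j - j \<le> card (set_mset w \<inter> {..i!j}))"
  proof -
    have "prec (set_mset w) {j+1 .. i ! j} \<longleftrightarrow> i!j - j \<le> card (set_mset w \<inter> {..i!j})"
      if j: "j < length i" for j
    proof -
      have ge: "j+1 \<le> i!j" using nth_ge[OF assms j] .
      have eqs: "{j+1 .. i ! j} = {j+1..<Suc (i!j)}" by auto
      have sl: "sl {j+1 .. i ! j} = [j+1..<Suc (i!j)]" unfolding eqs by simp
      have c: "card {j+1 .. i ! j} = i!j - j" by simp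
      have "prec (set_mset w) {j+1 .. i ! j} \<longleftrightarrow> (\<forall>k<i!j-j. k+1 \<le> card (set_mset w \<inter> {..j+1+k}))"
        unfolding prec_iff[OF finite_set_mset finite_atLeastAtMost] c sl
      proof (rule all_cong)
        fix k assume "k < i!j - j"
        then have "j+1+k < Suc (i!j)" by linarith
        then have "[j+1..<Suc (i!j)] ! k = j+1+k" by (rule nth_upt)
        then show "(k+1 \<le> card (set_mset w \<inter> {..[j+1..<Suc (i!j)] ! k})) = (k+1 \<le> card (set_mset w \<inter> {..j+1+k}))"
          by (simp only:)
      qed
      also have "\<dots> \<longleftrightarrow> i!j - j \<le> card (set_mset w \<inter> {..i!j})" using window[OF finite_set_mset ge] .
      finally show ?thesis .
    qed
    then show ?thesis by blast
  qed
  finally show ?thesis by blast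
qed


lemma split_card:
  assumes "A \<subseteq> {1..n}" "x \<le> n"
  shows "card (A \<inter> {..x}) + card (({1..n} - A) \<inter> {..x}) = x"
proof -
  have "(A \<inter> {..x}) \<union> (({1..n} - A) \<inter> {..x}) = {1..x}" using assms by auto
  moreover have "(A \<inter> {..x}) \<inter> (({1..n} - A) \<inter> {..x}) = {}" by auto
  moreover have "finite (A \<inter> {..x})" "finite (({1..n} - A) \<inter> {..x})" by auto
  ultimately show ?thesis by (metis card_Un_disjoint card_atLeastAtMost diff_Suc_1)
qed

lemma comb:
  assumes "sorted_wrt (<) i" "set i \<subseteq> {1..n}" "A \<subseteq> {1..n}"
  shows "(\<forall>U. U \<subseteq> {1..n} \<and> card U = length i \<and> prec U (set i) \<longrightarrow> U \<inter> A \<noteq> {}) \<longleftrightarrow>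
         (\<exists>j<length i. i!j - j \<le> card (A \<inter> {..i!j}))"
proof -
  have sli: "sl (set i) = i" using assms(1) by (metis sorted_list_of_set.idem_if_sorted_distinct strict_sorted_iff)
  have ci: "card (set i) = length i" using assms(1) by (simp add: strict_sorted_iff distinct_card)
  have iln: "\<And>j. j < length i \<Longrightarrow> i!j \<le> n" using assms(2) nth_mem by fastforce
  define C where "C = {1..n} - A"
  have fC: "finite C" unfolding C_def by simp
  show ?thesis
  proof
    assume H: "\<forall>U. U \<subseteq> {1..n} \<and> card U = length i \<and> prec U (set i) \<longrightarrow> U \<inter> A \<noteq> {}"
    show "\<exists>j<length i. i!j - j \<le> card (A \<inter> {..i!j})"
    proof (rule ccontr)
      assume "\<not> (\<exists>j<length i. i!j - j \<le> card (A \<inter> {..i!j}))"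
      then have lt: "\<And>j. j < length i \<Longrightarrow> card (A \<inter> {..i!j}) < i!j - j" by force
      have "\<forall>k<card (set i). k+1 \<le> card (C \<inter> {..sl (set i) ! k})"
      proof (intro allI impI)
        fix k assume "k < card (set i)"
        then have k: "k < length i" using ci by simp
        have "card (A \<inter> {..i!k}) + card (C \<inter> {..i!k}) = i!k"
          unfolding C_def using split_card[OF assms(3) iln[OF k]] .
        then show "k+1 \<le> card (C \<inter> {..sl (set i) ! k})" using lt[OF k] sli by simp
      qed
      then have "prec C (set i)" using prec_iff[OF fC] by simp
      then obtain U where U: "U \<subseteq> C" "card U = length i" "prec U (set i)"
        using exists_sub[OF fC assms(1)] by blast
      have "U \<subseteq> {1..n}" "U \<inter> A = {}" using U(1) unfolding C_def by auto
      then show False using H U by blast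
    qed
  next
    assume "\<exists>j<length i. i!j - j \<le> card (A \<inter> {..i!j})"
    then obtain j where j: "j < length i" "i!j - j \<le> card (A \<inter> {..i!j})" by blast
    show "\<forall>U. U \<subseteq> {1..n} \<and> card U = length i \<and> prec U (set i) \<longrightarrow> U \<inter> A \<noteq> {}"
    proof (intro allI impI notI)
      fix U assume U: "U \<subseteq> {1..n} \<and> card U = length i \<and> prec U (set i)" and D: "U \<inter> A = {}"
      have fU: "finite U" using U finite_subset by blast
      have "\<forall>k<card (set i). k+1 \<le> card (U \<inter> {..sl (set i) ! k})" using prec_iff[OF fU] U by simp
      then have "j+1 \<le> card (U \<inter> {..i!j})" using j(1) ci sli by simp
      moreover have "card (U \<inter> {..i!j}) \<le> card (C \<inter> {..i!j})"
        using U D fC unfolding C_def by (intro card_mono) auto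
      moreover have "card (A \<inter> {..i!j}) + card (C \<inter> {..i!j}) = i!j"
        unfolding C_def using split_card[OF assms(3) iln[OF j(1)]] .
      moreover have "j+1 \<le> i!j" using nth_ge[OF assms(1,2) j(1)] .
      ultimately show False using j(2) by linarith
    qed
  qed
qed

theorem theorem3p18:
  fixes n :: nat and i :: "nat list"
  assumes "sorted_wrt (<) i" and "set i \<subseteq> {1..n}"
  shows "alex_dual n (sfBorel n {mset i}) =
         sfBorel n {mset_set {j+1 .. i ! j} | j. j < length i}"
proof -
  have mi: "mset i = mset_set (set i)" using assms(1) by (simp add: strict_sorted_iff mset_set_set)
  show ?thesis
  proof (rule set_eqI)
    fix w
    have "w \<in> alex_dual n (sfBorel n {mset i}) \<longleftrightarrow>
          monomial n w \<and> (\<forall>U. U \<subseteq> {1..n} \<and> card U = length i \<and> prec U (set i) \<longrightarrow> U \<inter> set_mset w \<noteq> {})"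
    proof -
      have "w \<in> alex_dual n (sfBorel n {mset i}) \<longleftrightarrow>
            monomial n w \<and> (\<forall>u. u \<in> min_gens (sfBorel n {mset_set (set i)}) \<longrightarrow> w \<in> prime_of n u)"
        unfolding alex_dual_def mi by blast
      also have "\<dots> \<longleftrightarrow> monomial n w \<and> (\<forall>U. U \<subseteq> {1..n} \<and> card U = length i \<and> prec U (set i) \<longrightarrow> w \<in> prime_of n (mset_set U))"
        unfolding min_gens_char[OF assms(1)] by blast
      also have "\<dots> \<longleftrightarrow> monomial n w \<and> (\<forall>U. U \<subseteq> {1..n} \<and> card U = length i \<and> prec U (set i) \<longrightarrow> U \<inter> set_mset w \<noteq> {})"
      proof -
        have "\<And>U. U \<subseteq> {1..n} \<Longrightarrow> set_mset (mset_set U) = U" using finite_subset by (metis finite_atLeastAtMost finite_set_mset_mset_set)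
        then show ?thesis unfolding prime_of_char by metis
      qed
      finally show ?thesis .
    qed
    also have "\<dots> \<longleftrightarrow> monomial n w \<and> (\<exists>j<length i. i!j - j \<le> card (set_mset w \<inter> {..i!j}))"
    proof (cases "monomial n w")
      case True
      then have "set_mset w \<subseteq> {1..n}" unfolding monomial_def .
      then show ?thesis using comb[OF assms] True by blast
    qed simp
    also have "\<dots> \<longleftrightarrow> w \<in> sfBorel n {mset_set {j+1 .. i ! j} | j. j < length i}"
      using rhs_char[OF assms] by simp
    finally show "w \<in> alex_dual n (sfBorel n {mset i}) \<longleftrightarrow> w \<in> sfBorel n {mset_set {j+1 .. i ! j} | j. j < length i}" .
  qed
qed

end
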